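(* Let $G$ be a finite abelian group of order $N$. Then for every integer $m$ with $1 \leq m \leq N/2$, \[\rho_\pm(G, m, 2) \geq \min\{\rho_G^-(m),\ \rho_G^-(2m) - 1\}.\]
   Context: For subsets $A, B$ of a finite abelian group $(G,+)$ of order $N$, write $A - B = \{a - b \mid a \in A, b \in B\}$, and for $1 \le r \le N$ let $\rho^-_G(r) = \min \{|A - A| \mid A \subseteq G, |A| = r\}$. For a subset $A = \{a_1, \ldots, a_m\} \subseteq G$ of $m$ distinct elements, the signed sumset $2_\pm A$ is $\{\lambda_1 a_1 + \cdots + \lambda_m a_m \mid \lambda_i \in \mathbb{Z},\ \sum_{i=1}^m |\lambda_i| = 2\}$; equivalently it consists of the elements $\pm 2a$ for $a \in A$ and $\pm a \pm b$ for distinct $a, b \in A$. For $1 \le m \le N$, $\rho_\pm(G, m, 2) = \min\{|2_\pm A| \mid A \subseteq G, |A| = m\}$. *)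

theory Defs
  imports Main
begin

definition diffset :: "'a::ab_group_add set \<Rightarrow> 'a set \<Rightarrow> 'a set" where
  "diffset A B = {a - b | a b. a \<in> A \<and> b \<in> B}"

definition rho_minus :: "'a::ab_group_add set \<Rightarrow> nat \<Rightarrow> nat" where
  "rho_minus G r = Min {card (diffset A A) | A. A \<subseteq> G \<and> card A = r}"

definition signed_sumset2 :: "'a::ab_group_add set \<Rightarrow> 'a set" where
  "signed_sumset2 A =
     {x. \<exists>a\<in>A. x = a + a \<or> x = - (a + a)} \<union>
     {x. \<exists>a\<in>A. \<exists>b\<in>A. a \<noteq> b \<and>
          (x = a + b \<or> x = a - b \<or> x = - a + b \<or> x = - a - b)}"

definition rho_pm2 :: "'a::ab_group_add set \<Rightarrow> nat \<Rightarrow> nat" where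
  "rho_pm2 G m = Min {card (signed_sumset2 A) | A. A \<subseteq> G \<and> card A = m}"

end

theory Submission
  imports Defs
begin

lemma fin_compr:
  fixes f :: "'a::finite set \<Rightarrow> nat"
  shows "finite {f A | A. P A}"
proof -
  have "{f A | A. P A} = f ` {A. P A}" by auto
  then show ?thesis by simp
qed

lemma rho_minus_le:
  fixes A :: "'a::{ab_group_add, finite} set"
  shows "rho_minus (UNIV::'a set) (card A) \<le> card (diffset A A)"
  unfolding rho_minus_def
  by (rule Min_le[OF fin_compr]) auto

lemma case2:
  fixes A :: "'a::ab_group_add set"
  assumes "0 \<in> signed_sumset2 A"
  shows "diffset A A \<subseteq> signed_sumset2 A"
proof
  fix x assume "x \<in> diffset A A"
  then obtain a b where ab: "a \<in> A" "b \<in> A" "x = a - b" unfolding diffset_def by blast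
  show "x \<in> signed_sumset2 A"
  proof (cases "a = b")
    case True then show ?thesis using assms ab by simp
  next
    case False then show ?thesis using ab unfolding signed_sumset2_def by blast
  qed
qed

lemma case1:
  fixes A :: "'a::ab_group_add set"
  shows "diffset (A \<union> uminus ` A) (A \<union> uminus ` A) \<subseteq> insert 0 (signed_sumset2 A)"
proof
  fix x assume "x \<in> diffset (A \<union> uminus ` A) (A \<union> uminus ` A)"
  then obtain a b where ab: "a \<in> A \<union> uminus ` A" "b \<in> A \<union> uminus ` A" "x = a - b"
    unfolding diffset_def by blast
  show "x \<in> insert 0 (signed_sumset2 A)"
  proof (cases "a = b")
    case True then show ?thesis using ab by simp
  next
    case False
    from ab(1) obtain c where c: "c \<in> A" "a = c \<or> a = - c" by blast
    from ab(2) obtain d where d: "d \<in> A" "b = d \<or> b = - d" by blast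
    show ?thesis
    proof (cases "c = d")
      case True
      with c d False have "x = c + c \<or> x = - (c + c)" using ab(3)
        by (auto simp: algebra_simps)
      then show ?thesis using c unfolding signed_sumset2_def by blast
    next
      case cd: False
      have "x = c + d \<or> x = c - d \<or> x = - c + d \<or> x = - c - d" using ab(3) c d
        by (auto simp: algebra_simps)
      then show ?thesis using c d cd unfolding signed_sumset2_def by blast
    qed
  qed
qed

theorem mainTheorem9:
  fixes m :: nat
  assumes "1 \<le> m" and "2 * m \<le> card (UNIV :: 'a::{ab_group_add, finite} set)"
  shows "rho_pm2 (UNIV :: 'a set) m \<ge>
           min (rho_minus (UNIV :: 'a set) m) (rho_minus (UNIV :: 'a set) (2 * m) - 1)"
proof -
  let ?S = "{card (signed_sumset2 A) | A. A \<subseteq> (UNIV::'a set) \<and> card A = m}"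
  have e: "?S = (\<lambda>A. card (signed_sumset2 A)) ` {A::'a set. card A = m}" by (auto simp: image_iff; blast)
  obtain A0 :: "'a set" where "card A0 = m"
    using obtain_subset_with_card_n[of m "UNIV :: 'a set"] assms(2) by auto
  then have ne: "?S \<noteq> {}" by blast
  have fS: "finite ?S" by (rule fin_compr)
  have "Min ?S \<in> ?S" using ne fS by (intro Min_in) auto
  then obtain A :: "'a set" where A: "card A = m" and mn: "Min ?S = card (signed_sumset2 A)"
    by blast
  have mn: "rho_pm2 (UNIV::'a set) m = card (signed_sumset2 A)" unfolding rho_pm2_def using mn by simp
  show ?thesis
  proof (cases "0 \<in> signed_sumset2 A")
    case True
    have "rho_minus (UNIV::'a set) m \<le> card (diffset A A)" using rho_minus_le[of A] A by simp
    also have "\<dots> \<le> card (signed_sumset2 A)" using case2[OF True] by (intro card_mono) auto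
    finally show ?thesis using mn by simp
  next
    case False
    have disj: "A \<inter> uminus ` A = {}"
    proof (rule ccontr)
      assume "A \<inter> uminus ` A \<noteq> {}"
      then obtain a b where "a \<in> A" "b \<in> A" "a = - b" by blast
      have "0 \<in> signed_sumset2 A"
      proof (cases "a = b")
        case True
        then have "0 = a + a" using \<open>a = - b\<close> by (metis add.right_inverse)
        then show ?thesis using \<open>a \<in> A\<close> unfolding signed_sumset2_def by blast
      next
        case False
        have "0 = a + b" using \<open>a = - b\<close> by simp
        then show ?thesis using False \<open>a \<in> A\<close> \<open>b \<in> A\<close> unfolding signed_sumset2_def by blast
      qed
      with False show False by simp
    qed
    have "card (A \<union> uminus ` A) = card A + card (uminus ` A)"
      using disj by (intro card_Un_disjoint) auto
    also have "card (uminus ` A) = card A" by (intro card_image) (simp add: inj_on_def)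
    finally have c2: "card (A \<union> uminus ` A) = 2 * m" using A by simp
    have "rho_minus (UNIV::'a set) (2*m) \<le> card (diffset (A \<union> uminus ` A) (A \<union> uminus ` A))"
      using rho_minus_le[of "A \<union> uminus ` A"] c2 by simp
    also have "\<dots> \<le> card (insert 0 (signed_sumset2 A))" using case1 by (intro card_mono) auto
    also have "\<dots> = card (signed_sumset2 A) + 1" using False by simp
    finally show ?thesis using mn by simp
  qed
qed

end
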